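(* Let $a,b,p,q$ be positive real numbers and consider the system of difference equations $$y_{n+1}=\frac{a z_n}{p+z_n}e^{-y_n},\qquad z_{n+1}=\frac{b y_n}{q+y_n}e^{-z_n},\qquad n=0,1,2,\dots$$ with nonnegative initial values $y_0,z_0$. Then: (i) the system always has the zero equilibrium $(0,0)$; (ii) if $\frac{ab}{pq}>1$, then the system has a unique positive equilibrium.
   Context: An equilibrium of the system is a pair $(\bar y,\bar z)$ with $\bar y=\frac{a\bar z}{p+\bar z}e^{-\bar y}$ and $\bar z=\frac{b\bar y}{q+\bar y}e^{-\bar z}$; it is positive if $\bar y>0$ and $\bar z>0$. *)

theory Defs
  imports Complex_Main
begin

definition equilibrium :: "real \<Rightarrow> real \<Rightarrow> real \<Rightarrow> real \<Rightarrow> real \<Rightarrow> real \<Rightarrow> bool" where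
  "equilibrium a b p q y z \<longleftrightarrow>
     y = a * z / (p + z) * exp (- y) \<and> z = b * y / (q + y) * exp (- z)"

definition positive_equilibrium :: "real \<Rightarrow> real \<Rightarrow> real \<Rightarrow> real \<Rightarrow> real \<Rightarrow> real \<Rightarrow> bool" where
  "positive_equilibrium a b p q y z \<longleftrightarrow> equilibrium a b p q y z \<and> y > 0 \<and> z > 0"

end

theory Submission
  imports Defs
begin

lemma eq_char:
  fixes a b p q y z :: real
  assumes "a > 0" "b > 0" "p > 0" "q > 0" "y > 0" "z > 0"
    and "equilibrium a b p q y z"
  shows "y * exp y < a \<and> z = y * (p * exp y / (a - y * exp y)) \<and>
         p * exp y / (a - y * exp y) * exp z * (q + y) = b"
proof -
  have e1: "y = a * z / (p + z) * exp (- y)" and e2: "z = b * y / (q + y) * exp (- z)"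
    using assms(7) unfolding equilibrium_def by auto
  have pz: "p + z > 0" using assms by simp
  have E1: "y * exp y * (p + z) = a * z"
  proof -
    have "y * exp y = a * z / (p + z) * exp (- y) * exp y" using e1 by simp
    also have "\<dots> = a * z / (p + z)" by (simp add: mult.assoc flip: exp_add)
    finally have "y * exp y = a * z / (p + z)" .
    thus ?thesis using pz by (simp add: field_simps)
  qed
  have E2: "z * exp z * (q + y) = b * y"
  proof -
    have "z * exp z = b * y / (q + y) * exp (- z) * exp z" using e2 by simp
    also have "\<dots> = b * y / (q + y)" by (simp add: mult.assoc flip: exp_add)
    finally have "z * exp z = b * y / (q + y)" .
    thus ?thesis using assms by (simp add: field_simps)
  qed
  have E1': "z * (a - y * exp y) = p * y * exp y" using E1 by (simp add: algebra_simps)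
  have pos: "p * y * exp y > 0" using assms by simp
  have lt: "y * exp y < a"
  proof (rule ccontr)
    assume "\<not> ?thesis"
    hence "z * (a - y * exp y) \<le> 0" using assms by (simp add: mult_nonneg_nonpos)
    thus False using E1' pos by simp
  qed
  have zeq: "z = y * (p * exp y / (a - y * exp y))"
    using E1' lt by (simp add: field_simps)
  have "p * exp y / (a - y * exp y) * exp z * (q + y) * y = b * y"
    using E2 zeq by (simp add: algebra_simps)
  hence "p * exp y / (a - y * exp y) * exp z * (q + y) = b" using assms(5)
    by (metis mult_right_cancel order_less_irrefl)
  thus ?thesis using lt zeq by simp
qed

lemma phi_mono:
  fixes a p q y y' :: real
  assumes "a > 0" "p > 0" "q > 0" "y > 0" "y < y'" "y' * exp y' < a"
  shows "p * exp y / (a - y * exp y) * exp (y * (p * exp y / (a - y * exp y))) * (q + y)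
       < p * exp y' / (a - y' * exp y') * exp (y' * (p * exp y' / (a - y' * exp y'))) * (q + y')"
proof -
  have ey: "exp y < exp y'" using assms by simp
  have w: "y * exp y < y' * exp y'" using assms ey
    by (meson exp_gt_zero less_le_trans mult_strict_mono order_less_imp_le)
  have d: "0 < a - y' * exp y'" using assms by simp
  have dd: "a - y' * exp y' < a - y * exp y" using w by simp
  have r: "p * exp y / (a - y * exp y) < p * exp y' / (a - y' * exp y')"
  proof -
    have "p * exp y / (a - y * exp y) < p * exp y' / (a - y * exp y)"
      using ey assms d dd by (simp add: divide_strict_right_mono)
    also have "\<dots> \<le> p * exp y' / (a - y' * exp y')"
      using d dd assms by (intro divide_left_mono) auto
    finally show ?thesis .
  qed
  have rpos: "0 < p * exp y / (a - y * exp y)" using assms d dd by simp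
  have z: "y * (p * exp y / (a - y * exp y)) < y' * (p * exp y' / (a - y' * exp y'))"
    using r rpos assms by (intro mult_strict_mono) auto
  hence ez: "exp (y * (p * exp y / (a - y * exp y))) < exp (y' * (p * exp y' / (a - y' * exp y')))"
    by simp
  have P: "p * exp y / (a - y * exp y) * exp (y * (p * exp y / (a - y * exp y)))
     < p * exp y' / (a - y' * exp y') * exp (y' * (p * exp y' / (a - y' * exp y')))"
    using r ez rpos by (intro mult_strict_mono) auto
  have P0: "0 \<le> p * exp y / (a - y * exp y) * exp (y * (p * exp y / (a - y * exp y)))"
    by (rule mult_nonneg_nonneg) (use rpos in auto)
  have P1: "0 < p * exp y' / (a - y' * exp y') * exp (y' * (p * exp y' / (a - y' * exp y')))"
    using P P0 by linarith
  have Q: "q + y < q + y'" using assms by simp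
  have Q0: "0 \<le> q + y" using assms by simp
  show ?thesis by (rule mult_strict_mono[OF P Q P1 Q0])
qed

theorem theorem3p1:
  fixes a b p q :: real
  assumes "a > 0" and "b > 0" and "p > 0" and "q > 0"
  shows "equilibrium a b p q 0 0 \<and>
         (a * b / (p * q) > 1 \<longrightarrow> (\<exists>!yz. positive_equilibrium a b p q (fst yz) (snd yz)))"
proof
  show "equilibrium a b p q 0 0" unfolding equilibrium_def by simp
  show "a * b / (p * q) > 1 \<longrightarrow> (\<exists>!yz. positive_equilibrium a b p q (fst yz) (snd yz))"
  proof
    assume h: "a * b / (p * q) > 1"
    have pqb: "p * q / b < a" using h assms by (simp add: field_simps)
    define r where "r = (\<lambda>y::real. p * exp y / (a - y * exp y))"
    define phi where "phi = (\<lambda>y::real. r y * exp (y * r y) * (q + y))"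
    define c where "c = a - p * q / (2 * b)"
    have "p * q / (2 * b) \<le> p * q / b" using assms by (simp add: divide_left_mono)
    hence c0: "0 \<le> c" using pqb unfolding c_def by simp
    have ca: "c < a" using assms unfolding c_def by simp
    have "\<exists>x\<ge>0. x \<le> a \<and> x * exp x = c"
    proof (rule IVT')
      show "0 * exp 0 \<le> c" using c0 by simp
      have "a \<le> a * exp a" using assms by simp
      thus "c \<le> a * exp a" using ca by simp
      show "0 \<le> a" using assms by simp
      show "continuous_on {0..a} (\<lambda>x::real. x * exp x)" by (intro continuous_intros)
    qed
    then obtain y2 where y2: "0 \<le> y2" "y2 * exp y2 = c" by auto
    have small: "\<And>y. 0 \<le> y \<Longrightarrow> y \<le> y2 \<Longrightarrow> y * exp y < a"
    proof -
      fix y :: real assume "0 \<le> y" "y \<le> y2"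
      hence "y * exp y \<le> y2 * exp y2" by (intro mult_mono) auto
      thus "y * exp y < a" using y2 ca by simp
    qed
    have phi0: "phi 0 = p * q / a" unfolding phi_def r_def by simp
    have "p * q < b * a" using pqb assms by (simp add: divide_less_eq mult.commute)
    hence phi0b: "phi 0 < b" using phi0 assms by (simp add: divide_less_eq)
    have phiy2: "b < phi y2"
    proof -
      have rr: "r y2 = p * exp y2 * (2 * b) / (p * q)"
        unfolding r_def using y2 assms unfolding c_def by simp
      have "r y2 \<ge> 2 * b / q"
      proof -
        have "p * exp y2 * (2 * b) / (p * q) \<ge> p * 1 * (2*b) / (p*q)"
          using y2 assms by (intro divide_right_mono mult_right_mono mult_left_mono) auto
        thus ?thesis using rr assms by simp
      qed
      moreover have rnn: "0 \<le> r y2"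
        using calculation assms by (meson divide_pos_pos less_le_trans mult_pos_pos zero_less_numeral less_imp_le)
      moreover have "exp (y2 * r y2) \<ge> 1" using y2 rr assms by simp
      moreover have "q + y2 \<ge> q" using y2 by simp
      ultimately have "phi y2 \<ge> 2 * b / q * 1 * q" unfolding phi_def
        using assms rnn by (intro mult_mono mult_nonneg_nonneg) auto
      thus ?thesis using assms by simp
    qed
    have cont: "continuous_on {0..y2} phi"
    proof -
      have "\<forall>y\<in>{0..y2}. a - y * exp y \<noteq> 0" using small by fastforce
      thus ?thesis unfolding phi_def r_def by (intro continuous_intros) auto
    qed
    have "\<exists>x\<ge>0. x \<le> y2 \<and> phi x = b"
      using IVT'[of phi 0 b y2] phi0b phiy2 y2 cont by auto
    then obtain y0 where y0: "0 \<le> y0" "y0 \<le> y2" "phi y0 = b" by auto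
    have y0p: "0 < y0" using y0 phi0b by (cases "y0 = 0") auto
    have s0: "y0 * exp y0 < a" using small y0 by simp
    define z0 where "z0 = y0 * r y0"
    have rpos: "r y0 > 0" unfolding r_def using s0 assms by simp
    have z0p: "z0 > 0" using y0p rpos unfolding z0_def by simp
    have eq1: "y0 = a * z0 / (p + z0) * exp (- y0)"
    proof -
      have d: "a - y0 * exp y0 > 0" using s0 by simp
      have "p + z0 = p * a / (a - y0 * exp y0)"
        unfolding z0_def r_def using d by (simp add: field_simps)
      hence "a * z0 / (p + z0) = y0 * exp y0"
        unfolding z0_def r_def using d assms by (simp add: field_simps)
      thus ?thesis by (simp add: exp_minus)
    qed
    have eq2: "z0 = b * y0 / (q + y0) * exp (- z0)"
    proof -
      have "b * y0 = z0 * exp z0 * (q + y0)"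
        using y0(3) unfolding phi_def z0_def by (simp add: algebra_simps)
      hence "b * y0 / (q + y0) = z0 * exp z0" using y0p assms by (simp add: field_simps)
      hence "b * y0 / (q + y0) * exp (- z0) = z0 * (exp z0 * exp (- z0))" by simp
      thus ?thesis by (simp flip: exp_add)
    qed
    show "\<exists>!yz. positive_equilibrium a b p q (fst yz) (snd yz)"
    proof (rule ex1I[of _ "(y0, z0)"])
      show "positive_equilibrium a b p q (fst (y0, z0)) (snd (y0, z0))"
        unfolding positive_equilibrium_def equilibrium_def using eq1 eq2 y0p z0p by simp
    next
      fix yz :: "real \<times> real"
      assume H: "positive_equilibrium a b p q (fst yz) (snd yz)"
      obtain y z where yz: "yz = (y, z)" by fastforce
      have py: "y > 0" "z > 0" "equilibrium a b p q y z"
        using H yz unfolding positive_equilibrium_def by auto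
      note C = eq_char[OF assms py(1,2,3)]
      have pe0: "equilibrium a b p q y0 z0" unfolding equilibrium_def using eq1 eq2 by simp
      note C0 = eq_char[OF assms y0p z0p pe0]
      have "y = y0"
      proof (rule ccontr)
        assume ne: "y \<noteq> y0"
        show False
        proof (cases "y < y0")
          case True
          from phi_mono[OF assms(1,3,4) py(1) True] C C0 show False by auto
        next
          case False
          hence "y0 < y" using ne by simp
          from phi_mono[OF assms(1,3,4) y0p this] C C0 show False by auto
        qed
      qed
      moreover have "z = z0" using C C0 calculation by simp
      ultimately show "yz = (y0, z0)" using yz by simp
    qed
  qed
qed

end
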